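(* Let $G$ be a simple connected graph on $n$ vertices with clique number $\omega\ge 2$ and Wiener index $W$. Let $G_1,\dots,G_k$ be all the cliques of $G$ of order $\omega$, and let $s_i=\sum_{v_j\in V(G_i)}D_j$ for $1\le i\le k$. Then (i) if $\omega=n$, then $S_{\mathcal{Q}}(G)=n$; (ii) if $2\le\omega\le n-1$, then $$S_{\mathcal{Q}}(G)\ge \max_{1\le i\le k}\frac{\sqrt{a_i^{2}-4b_i(n-\omega)\omega}}{(n-\omega)\omega},$$ where $a_i=n\omega(1-\omega)+4\omega(s_i-W)-ns_i$ and $b_i=4W\omega(\omega-1)+4s_i(W-s_i)$.
   Context: $G$ has vertex set $\{v_1,\dots,v_n\}$; $d_G$ is the graph distance; $\mathcal{D}(G)=(d_G(v_i,v_j))$. $D_j=\sum_{l\ne j}d_G(v_j,v_l)$ is the transmission of $v_j$, $Tr(G)=\mathrm{diag}(D_1,\dots,D_n)$, $\mathcal{Q}(G)=Tr(G)+\mathcal{D}(G)$. $W=\sum_{i<j}d_G(v_i,v_j)$ is the Wiener index. A clique is a complete subgraph; the clique number is the largest order of a clique. $S_{\mathcal{Q}}(G)$ is the largest eigenvalue of $\mathcal{Q}(G)$ minus the least eigenvalue of $\mathcal{Q}(G)$. *)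

theory Defs
  imports Complex_Main
begin

definition simple_graph :: "'a set \<Rightarrow> ('a \<Rightarrow> 'a \<Rightarrow> bool) \<Rightarrow> bool" where
  "simple_graph V E \<longleftrightarrow> finite V \<and> (\<forall>u v. E u v \<longrightarrow> u \<in> V \<and> v \<in> V)
     \<and> (\<forall>u v. E u v \<longrightarrow> E v u) \<and> (\<forall>u. \<not> E u u)"

fun is_walk :: "('a \<Rightarrow> 'a \<Rightarrow> bool) \<Rightarrow> 'a list \<Rightarrow> bool" where
  "is_walk E [] = False"
| "is_walk E [x] = True"
| "is_walk E (x # y # xs) = (E x y \<and> is_walk E (y # xs))"

definition walk_of_len :: "('a \<Rightarrow> 'a \<Rightarrow> bool) \<Rightarrow> 'a \<Rightarrow> 'a \<Rightarrow> nat \<Rightarrow> bool" where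
  "walk_of_len E u v k \<longleftrightarrow> (\<exists>xs. is_walk E xs \<and> hd xs = u \<and> last xs = v \<and> length xs = Suc k)"

definition connected_graph :: "'a set \<Rightarrow> ('a \<Rightarrow> 'a \<Rightarrow> bool) \<Rightarrow> bool" where
  "connected_graph V E \<longleftrightarrow> (\<forall>u\<in>V. \<forall>v\<in>V. \<exists>k. walk_of_len E u v k)"

definition gdist :: "('a \<Rightarrow> 'a \<Rightarrow> bool) \<Rightarrow> 'a \<Rightarrow> 'a \<Rightarrow> nat" where
  "gdist E u v = (LEAST k. walk_of_len E u v k)"

definition transmission :: "'a set \<Rightarrow> ('a \<Rightarrow> 'a \<Rightarrow> bool) \<Rightarrow> 'a \<Rightarrow> real" where
  "transmission V E v = (\<Sum>w\<in>V - {v}. real (gdist E v w))"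

definition wiener :: "'a set \<Rightarrow> ('a \<Rightarrow> 'a \<Rightarrow> bool) \<Rightarrow> real" where
  "wiener V E = (\<Sum>u\<in>V. \<Sum>v\<in>V. real (gdist E u v)) / 2"

definition dsl_matrix :: "'a set \<Rightarrow> ('a \<Rightarrow> 'a \<Rightarrow> bool) \<Rightarrow> 'a \<Rightarrow> 'a \<Rightarrow> real" where
  "dsl_matrix V E u v = (if u = v then transmission V E u else 0) + real (gdist E u v)"

definition is_eigenvalue :: "'a set \<Rightarrow> ('a \<Rightarrow> 'a \<Rightarrow> real) \<Rightarrow> real \<Rightarrow> bool" where
  "is_eigenvalue V M mu \<longleftrightarrow> (\<exists>x. (\<exists>v\<in>V. x v \<noteq> 0) \<and>
      (\<forall>u\<in>V. (\<Sum>w\<in>V. M u w * x w) = mu * x u))"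

definition dsl_spread :: "'a set \<Rightarrow> ('a \<Rightarrow> 'a \<Rightarrow> bool) \<Rightarrow> real" where
  "dsl_spread V E = Max {mu. is_eigenvalue V (dsl_matrix V E) mu}
                    - Min {mu. is_eigenvalue V (dsl_matrix V E) mu}"

definition is_clique :: "'a set \<Rightarrow> ('a \<Rightarrow> 'a \<Rightarrow> bool) \<Rightarrow> 'a set \<Rightarrow> bool" where
  "is_clique V E C \<longleftrightarrow> C \<subseteq> V \<and> (\<forall>u\<in>C. \<forall>v\<in>C. u \<noteq> v \<longrightarrow> E u v)"

definition clique_number :: "'a set \<Rightarrow> ('a \<Rightarrow> 'a \<Rightarrow> bool) \<Rightarrow> nat" where
  "clique_number V E = Max {card C | C. is_clique V E C}"

end

theory Submission imports Defs "HOL-Analysis.Analysis" begin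


lemma walk_len0: "walk_of_len E u v 0 \<longleftrightarrow> u = v"
proof
  assume "walk_of_len E u v 0"
  then obtain xs where "is_walk E xs" "hd xs = u" "last xs = v" "length xs = 1"
    unfolding walk_of_len_def by auto
  then show "u = v" by (cases xs) auto
next
  assume "u = v" then show "walk_of_len E u v 0"
    unfolding walk_of_len_def by (auto intro!: exI[of _ "[u]"])
qed

lemma walk_len1: "E u v \<Longrightarrow> walk_of_len E u v 1"
  unfolding walk_of_len_def by (auto intro!: exI[of _ "[u,v]"])

lemma gdist_refl: "gdist E u u = 0"
  unfolding gdist_def using walk_len0 by (metis (mono_tags) Least_eq_0)

lemma gdist_adj: assumes "u \<noteq> v" "E u v" shows "gdist E u v = 1"
proof -
  have "(LEAST k. walk_of_len E u v k) = 1"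
  proof (rule Least_equality)
    show "walk_of_len E u v 1" using walk_len1[of E u v] assms(2) by simp
    fix k assume "walk_of_len E u v k"
    then show "1 \<le> k" using walk_len0[of E u v] assms(1) by (cases k) auto
  qed
  then show ?thesis unfolding gdist_def .
qed

lemma is_walk_snoc: "is_walk E (xs @ [y, z]) = (is_walk E (xs @ [y]) \<and> E y z)"
proof (induction xs)
  case Nil then show ?case by simp
next
  case (Cons a xs)
  then show ?case by (cases xs) auto
qed

lemma is_walk_rev: assumes sym: "\<forall>u v. E u v \<longrightarrow> E v u"
  shows "is_walk E xs \<Longrightarrow> is_walk E (rev xs)"
proof (induction xs rule: induct_list012)
  case 1 then show ?case by simp
next
  case (2 x) then show ?case by simp
next
  case (3 x y zs)
  then have "is_walk E (rev (y # zs))" "E x y" by auto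
  then show ?case using is_walk_snoc[of E "rev zs" y x] sym by simp
qed

lemma walk_of_len_sym: assumes sym: "\<forall>u v. E u v \<longrightarrow> E v u"
  shows "walk_of_len E u v k \<Longrightarrow> walk_of_len E v u k"
  unfolding walk_of_len_def
proof (elim exE conjE)
  fix xs assume h: "is_walk E xs" "hd xs = u" "last xs = v" "length xs = Suc k"
  then have ne: "xs \<noteq> []" by auto
  show "\<exists>xs. is_walk E xs \<and> hd xs = v \<and> last xs = u \<and> length xs = Suc k"
    by (rule exI[of _ "rev xs"]) (use h ne is_walk_rev[OF sym] in \<open>auto simp: hd_rev last_rev\<close>)
qed

lemma gdist_sym: assumes sym: "\<forall>u v. E u v \<longrightarrow> E v u"
  shows "gdist E u v = gdist E v u"
proof -
  have "\<And>k. walk_of_len E u v k = walk_of_len E v u k"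
    using walk_of_len_sym[OF sym] by blast
  then have "walk_of_len E u v = walk_of_len E v u" by blast
  then show ?thesis unfolding gdist_def by simp
qed



definition vbl :: "'a set \<Rightarrow> ('a\<Rightarrow>'a\<Rightarrow>real) \<Rightarrow> ('a\<Rightarrow>real) \<Rightarrow> ('a\<Rightarrow>real) \<Rightarrow> real" where
  "vbl V M y x = (\<Sum>u\<in>V. y u * (\<Sum>w\<in>V. M u w * x w))"
definition vip :: "'a set \<Rightarrow> ('a\<Rightarrow>real) \<Rightarrow> ('a\<Rightarrow>real) \<Rightarrow> real" where
  "vip V y x = (\<Sum>u\<in>V. y u * x u)"

lemma vbl_sym: assumes "\<forall>u\<in>V. \<forall>w\<in>V. M u w = M w u"
  shows "vbl V M y x = vbl V M x y"
proof -
  have "vbl V M y x = (\<Sum>u\<in>V. \<Sum>w\<in>V. y u * M u w * x w)"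
    unfolding vbl_def by (simp add: sum_distrib_left mult.assoc)
  also have "\<dots> = (\<Sum>w\<in>V. \<Sum>u\<in>V. y u * M u w * x w)" by (rule sum.swap)
  also have "\<dots> = (\<Sum>w\<in>V. \<Sum>u\<in>V. x w * M w u * y u)"
    using assms by (auto intro!: sum.cong)
  also have "\<dots> = vbl V M x y"
    unfolding vbl_def by (simp add: sum_distrib_left mult.assoc)
  finally show ?thesis .
qed

lemma vip_sym: "vip V y x = vip V x y"
  unfolding vip_def by (simp add: mult.commute)

lemma vbl_lin1: "vbl V M (\<lambda>u. x u + t * y u) z = vbl V M x z + t * vbl V M y z"
  unfolding vbl_def by (simp add: algebra_simps sum.distrib sum_distrib_left)
lemma vbl_lin2: "vbl V M z (\<lambda>u. x u + t * y u) = vbl V M z x + t * vbl V M z y"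
  unfolding vbl_def by (simp add: algebra_simps sum.distrib sum_distrib_left)
lemma vip_lin1: "vip V (\<lambda>u. x u + t * y u) z = vip V x z + t * vip V y z"
  unfolding vip_def by (simp add: algebra_simps sum.distrib sum_distrib_left)
lemma vip_lin2: "vip V z (\<lambda>u. x u + t * y u) = vip V z x + t * vip V z y"
  unfolding vip_def by (simp add: algebra_simps sum.distrib sum_distrib_left)
lemma vbl_scale: "vbl V M (\<lambda>u. c * x u) (\<lambda>u. c * x u) = c^2 * vbl V M x x"
  unfolding vbl_def by (simp add: algebra_simps sum_distrib_left power2_eq_square)
lemma vip_scale: "vip V (\<lambda>u. c * x u) (\<lambda>u. c * x u) = c^2 * vip V x x"
  unfolding vip_def by (simp add: algebra_simps sum_distrib_left power2_eq_square)
lemma vbl_cong: "(\<And>u. u \<in> V \<Longrightarrow> x u = x' u) \<Longrightarrow> (\<And>u. u \<in> V \<Longrightarrow> y u = y' u) \<Longrightarrow> vbl V M x y = vbl V M x' y'"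
  unfolding vbl_def by (auto intro!: sum.cong)
lemma vip_cong: "(\<And>u. u \<in> V \<Longrightarrow> x u = x' u) \<Longrightarrow> (\<And>u. u \<in> V \<Longrightarrow> y u = y' u) \<Longrightarrow> vip V x y = vip V x' y'"
  unfolding vip_def by (auto intro!: sum.cong)

lemma vip_nonneg: "vip V x x \<ge> 0"
  unfolding vip_def by (auto intro: sum_nonneg)

lemma vip_zero: assumes "finite V" "vip V x x = 0" "u \<in> V" shows "x u = 0"
proof -
  have "(\<Sum>u\<in>V. x u * x u) = 0" using assms unfolding vip_def by simp
  then have "\<forall>u\<in>V. x u * x u = 0" using assms(1) by (subst (asm) sum_nonneg_eq_0_iff) auto
  then show ?thesis using assms(3) by simp
qed

lemma vbl_zero: assumes "\<And>u. u \<in> V \<Longrightarrow> x u = 0" shows "vbl V M x x = 0"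
  unfolding vbl_def using assms by simp

lemma lin_quad_zero: fixes a b :: real assumes "\<forall>t. t * a + t^2 * b \<le> 0" shows "a = 0"
proof (rule ccontr)
  assume a: "a \<noteq> 0"
  define c where "c = \<bar>b\<bar> + 1"
  define t where "t = a / c"
  have pos: "c > 0" unfolding c_def by simp
  have "-\<bar>b\<bar> \<le> b" by simp
  then have "t^2 * (-\<bar>b\<bar>) \<le> t^2 * b" by (rule mult_left_mono) simp
  then have 1: "t * a + t^2 * b \<ge> t * a - t^2 * (c - 1)" unfolding c_def by simp
  have 2: "t * a - t^2 * (c - 1) = a^2 / c^2"
    unfolding t_def using pos by (simp add: field_simps power2_eq_square)
  have 3: "a^2 / c^2 > 0" using a pos by simp
  show False using assms[rule_format, of t] 1 2 3 by linarith
qed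



lemma eig_max:
  assumes fin: "finite V" and ne: "V \<noteq> {}" and sym: "\<forall>u\<in>V. \<forall>w\<in>V. M u w = M w u"
  shows "\<exists>l. is_eigenvalue V M l \<and> (\<forall>x. vbl V M x x \<le> l * vip V x x)"
proof -
  define X where "X = product_topology (\<lambda>_. euclideanreal) V"
  define f where "f = (\<lambda>x. vbl V M x x)"
  define g where "g = (\<lambda>x. vip V x x)"
  define K where "K = {x \<in> topspace X. g x \<in> {1}} \<inter> PiE V (\<lambda>_. {-1..1::real})"
  have contf: "continuous_map X euclideanreal f"
    unfolding X_def f_def vbl_def
    by (intro continuous_intros fin) (auto intro!: continuous_intros)
  have contg: "continuous_map X euclideanreal g"
    unfolding X_def g_def vip_def
    by (intro continuous_intros fin) (auto intro!: continuous_intros)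
  have cK: "compactin X K"
    unfolding K_def
  proof (rule closed_Int_compactin)
    show "closedin X {x \<in> topspace X. g x \<in> {1}}"
      by (rule closedin_continuous_map_preimage[OF contg]) simp
    show "compactin X (PiE V (\<lambda>_. {-1..1::real}))"
      unfolding X_def compactin_PiE by auto
  qed
  obtain v0 where v0: "v0 \<in> V" using ne by auto
  define e0 where "e0 = restrict (\<lambda>w. if w = v0 then 1 else 0::real) V"
  have "e0 \<in> K"
  proof -
    have "g e0 = (\<Sum>u\<in>V. (if u = v0 then 1 else 0))" unfolding g_def vip_def e0_def
      by (auto intro!: sum.cong)
    then have "g e0 = 1" using fin v0 by simp
    then show ?thesis unfolding K_def X_def e0_def by (auto simp: PiE_def)
  qed
  then have Kne: "K \<noteq> {}" by auto
  have "compact (f ` K)"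
    using image_compactin[OF cK contf] by simp
  then obtain y where "y \<in> f ` K" "\<forall>z\<in>f ` K. z \<le> y"
    using compact_attains_sup[of "f ` K"] Kne by auto
  then obtain x0 where x0K: "x0 \<in> K" and x0max: "\<And>x. x \<in> K \<Longrightarrow> f x \<le> f x0" by auto
  define lam where "lam = f x0"
  have gx0: "g x0 = 1" using x0K unfolding K_def by auto
  have ray: "vbl V M x x \<le> lam * vip V x x" for x
  proof (cases "vip V x x = 0")
    case True
    then have "\<And>u. u \<in> V \<Longrightarrow> x u = 0" using vip_zero[OF fin] by blast
    then show ?thesis using True vbl_zero[of V x M] by simp
  next
    case False
    then have pos: "vip V x x > 0" using vip_nonneg[of V x] by linarith
    define c where "c = 1 / sqrt (vip V x x)"
    have c2: "c^2 = 1 / vip V x x" unfolding c_def using pos by (simp add: power_divide)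
    define y where "y = restrict (\<lambda>u. c * x u) V"
    have gy: "g y = 1" unfolding g_def
      by (subst vip_cong[of V y "\<lambda>u. c * x u" y "\<lambda>u. c * x u"]) (use pos c2 in \<open>auto simp: y_def vip_scale\<close>)
    have fy: "f y = c^2 * vbl V M x x" unfolding f_def
      by (subst vbl_cong[of V y "\<lambda>u. c * x u" y "\<lambda>u. c * x u"]) (auto simp: y_def vbl_scale)
    have bnd: "y u \<in> {-1..1}" if "u \<in> V" for u
    proof -
      have "(y u)^2 \<le> g y" unfolding g_def vip_def
        using member_le_sum[of u V "\<lambda>u. y u * y u"] fin that by (simp add: power2_eq_square)
      then have "\<bar>y u\<bar> \<le> 1" using gy abs_square_le_1[of "y u"] by linarith
      then show ?thesis by auto
    qed
    have "y \<in> K" unfolding K_def X_def using gy bnd by (auto simp: y_def PiE_def)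
    then have "f y \<le> lam" using x0max unfolding lam_def by auto
    then have "vbl V M x x / vip V x x \<le> lam" using fy c2 by simp
    then show ?thesis using pos by (simp add: divide_le_eq mult.commute)
  qed
  define r where "r = (\<lambda>u. (\<Sum>w\<in>V. M u w * x0 w) - lam * x0 u)"
  have key: "vbl V M y x0 - lam * vip V y x0 = 0" for y
  proof -
    have "\<forall>t. t * (2 * (vbl V M y x0 - lam * vip V y x0)) + t^2 * (vbl V M y y - lam * vip V y y) \<le> 0"
    proof
      fix t
      have "vbl V M (\<lambda>u. x0 u + t * y u) (\<lambda>u. x0 u + t * y u) \<le> lam * vip V (\<lambda>u. x0 u + t * y u) (\<lambda>u. x0 u + t * y u)"
        by (rule ray)
      moreover have "vbl V M (\<lambda>u. x0 u + t * y u) (\<lambda>u. x0 u + t * y u)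
          = f x0 + 2 * t * vbl V M y x0 + t^2 * vbl V M y y"
        unfolding f_def vbl_lin1 vbl_lin2 using vbl_sym[OF sym, of x0 y]
        by (simp add: algebra_simps power2_eq_square)
      moreover have "vip V (\<lambda>u. x0 u + t * y u) (\<lambda>u. x0 u + t * y u)
          = g x0 + 2 * t * vip V y x0 + t^2 * vip V y y"
        unfolding g_def vip_lin1 vip_lin2 using vip_sym[of V x0 y]
        by (simp add: algebra_simps power2_eq_square)
      ultimately show "t * (2 * (vbl V M y x0 - lam * vip V y x0)) + t^2 * (vbl V M y y - lam * vip V y y) \<le> 0"
        using gx0 unfolding lam_def by (simp add: algebra_simps)
    qed
    then show ?thesis using lin_quad_zero by fastforce
  qed
  have "vbl V M r x0 - lam * vip V r x0 = vip V r r"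
    unfolding vbl_def vip_def r_def by (simp add: algebra_simps sum_subtractf sum_distrib_left sum.distrib)
  then have "vip V r r = 0" using key[of r] by simp
  then have r0: "\<And>u. u \<in> V \<Longrightarrow> r u = 0" using vip_zero[OF fin] by blast
  have "\<exists>v\<in>V. x0 v \<noteq> 0"
  proof (rule ccontr)
    assume "\<not> ?thesis"
    then have "g x0 = 0" unfolding g_def vip_def by simp
    then show False using gx0 by simp
  qed
  then have "is_eigenvalue V M lam"
    unfolding is_eigenvalue_def using r0 unfolding r_def by (intro exI[of _ x0]) auto
  then show ?thesis using ray by blast
qed



lemma vbl_neg: "vbl V (\<lambda>u w. - M u w) x x = - vbl V M x x"
  unfolding vbl_def by (simp add: sum_negf)

lemma eig_neg: "is_eigenvalue V (\<lambda>u w. - M u w) l \<Longrightarrow> is_eigenvalue V M (- l)"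
  unfolding is_eigenvalue_def
proof (elim exE conjE)
  fix x assume h: "\<exists>v\<in>V. x v \<noteq> 0" "\<forall>u\<in>V. (\<Sum>w\<in>V. - M u w * x w) = l * x u"
  show "\<exists>x. (\<exists>v\<in>V. x v \<noteq> 0) \<and> (\<forall>u\<in>V. (\<Sum>w\<in>V. M u w * x w) = - l * x u)"
  proof (intro exI[of _ x] conjI ballI)
    show "\<exists>v\<in>V. x v \<noteq> 0" using h(1) .
    fix u assume "u \<in> V"
    then have "(\<Sum>w\<in>V. - M u w * x w) = l * x u" using h(2) by blast
    then show "(\<Sum>w\<in>V. M u w * x w) = - l * x u" by (simp add: sum_negf)
  qed
qed

lemma eig_min:
  assumes fin: "finite V" and ne: "V \<noteq> {}" and sym: "\<forall>u\<in>V. \<forall>w\<in>V. M u w = M w u"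
  shows "\<exists>l. is_eigenvalue V M l \<and> (\<forall>x. l * vip V x x \<le> vbl V M x x)"
proof -
  have sym': "\<forall>u\<in>V. \<forall>w\<in>V. - M u w = - M w u" using sym by simp
  obtain l where l: "is_eigenvalue V (\<lambda>u w. - M u w) l"
    "\<forall>x. vbl V (\<lambda>u w. - M u w) x x \<le> l * vip V x x"
    using eig_max[OF fin ne sym'] by blast
  have 1: "is_eigenvalue V M (-l)" using eig_neg l(1) by blast
  have 2: "(-l) * vip V x x \<le> vbl V M x x" for x
  proof -
    have "vbl V (\<lambda>u w. - M u w) x x \<le> l * vip V x x" using l(2) by blast
    then show ?thesis unfolding vbl_neg by simp
  qed
  show ?thesis using 1 2 by blast
qed

lemma vbl_eig: "\<forall>u\<in>V. (\<Sum>w\<in>V. M u w * x w) = l * x u \<Longrightarrow> vbl V M y x = l * vip V y x"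
  unfolding vbl_def vip_def by (simp add: sum_distrib_left algebra_simps)

lemma vip_sum: "vip V (\<lambda>w. \<Sum>k\<in>F. a k * f k w) z = (\<Sum>k\<in>F. a k * vip V (f k) z)"
proof -
  have "vip V (\<lambda>w. \<Sum>k\<in>F. a k * f k w) z = (\<Sum>w\<in>V. \<Sum>k\<in>F. a k * f k w * z w)"
    unfolding vip_def by (simp add: sum_distrib_right)
  also have "\<dots> = (\<Sum>k\<in>F. \<Sum>w\<in>V. a k * f k w * z w)" by (rule sum.swap)
  also have "\<dots> = (\<Sum>k\<in>F. a k * vip V (f k) z)"
    unfolding vip_def by (simp add: sum_distrib_left mult.assoc)
  finally show ?thesis .
qed

lemma eig_finite:
  assumes fin: "finite V" and sym: "\<forall>u\<in>V. \<forall>w\<in>V. M u w = M w u"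
  shows "finite {l. is_eigenvalue V M l}"
proof (rule ccontr)
  assume "infinite {l. is_eigenvalue V M l}"
  then obtain F where F: "F \<subseteq> {l. is_eigenvalue V M l}" "finite F" "card F = Suc (card V)"
    using infinite_arbitrarily_large by blast
  have "\<exists>e. (\<forall>u\<in>V. (\<Sum>w\<in>V. M u w * e w) = l * e u) \<and> vip V e e = 1" if "l \<in> F" for l
  proof -
    have "is_eigenvalue V M l" using that F(1) by blast
    then obtain x where x: "\<exists>v\<in>V. x v \<noteq> 0" "\<forall>u\<in>V. (\<Sum>w\<in>V. M u w * x w) = l * x u"
      unfolding is_eigenvalue_def by blast
    have "vip V x x \<noteq> 0" using x(1) vip_zero[OF fin] by blast
    then have pos: "vip V x x > 0" using vip_nonneg[of V x] by linarith
    define c where "c = 1 / sqrt (vip V x x)"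
    have c2: "c^2 = 1 / vip V x x" unfolding c_def using pos by (simp add: power_divide)
    show ?thesis
    proof (intro exI[of _ "\<lambda>u. c * x u"] conjI ballI)
      fix u assume u: "u \<in> V"
      have "(\<Sum>w\<in>V. M u w * (c * x w)) = c * (\<Sum>w\<in>V. M u w * x w)"
        by (simp add: sum_distrib_left algebra_simps)
      then show "(\<Sum>w\<in>V. M u w * (c * x w)) = l * (c * x u)" using x(2) u by simp
    next
      show "vip V (\<lambda>u. c * x u) (\<lambda>u. c * x u) = 1" unfolding vip_scale using c2 pos by simp
    qed
  qed
  then have "\<forall>l\<in>F. \<exists>e. (\<forall>u\<in>V. (\<Sum>w\<in>V. M u w * e w) = l * e u) \<and> vip V e e = 1" by blast
  from bchoice[OF this] obtain e where e0: "\<forall>l\<in>F. (\<forall>u\<in>V. (\<Sum>w\<in>V. M u w * e l w) = l * e l u) \<and> vip V (e l) (e l) = 1"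
    by blast
  have e: "\<And>l. l \<in> F \<Longrightarrow> (\<forall>u\<in>V. (\<Sum>w\<in>V. M u w * e l w) = l * e l u) \<and> vip V (e l) (e l) = 1"
    using e0 by blast
  have orth: "vip V (e l) (e k) = (if l = k then 1 else 0)" if "l \<in> F" "k \<in> F" for l k
  proof (cases "l = k")
    case True then show ?thesis using e[OF that(1)] by simp
  next
    case False
    have "vbl V M (e l) (e k) = k * vip V (e l) (e k)" by (rule vbl_eig) (use e[OF that(2)] in blast)
    moreover have "vbl V M (e k) (e l) = l * vip V (e k) (e l)" by (rule vbl_eig) (use e[OF that(1)] in blast)
    ultimately have "(k - l) * vip V (e l) (e k) = 0"
      using vbl_sym[OF sym, of "e l" "e k"] vip_sym[of V "e l" "e k"] by (auto simp: algebra_simps)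
    then show ?thesis using False by simp
  qed
  have bessel: "(\<Sum>l\<in>F. (e l v)^2) \<le> 1" if v: "v \<in> V" for v
  proof -
    define y where "y = (\<lambda>w. \<Sum>l\<in>F. e l v * e l w)"
    define d where "d = (\<lambda>w. if w = v then 1 else 0::real)"
    define S where "S = (\<Sum>l\<in>F. (e l v)^2)"
    have h1: "vip V d y = S"
    proof -
      have "vip V d y = (\<Sum>w\<in>V. if w = v then y w else 0)"
        unfolding vip_def d_def by (auto intro!: sum.cong)
      also have "\<dots> = y v" using fin v by simp
      finally show ?thesis unfolding y_def S_def by (simp add: power2_eq_square)
    qed
    have h2: "vip V (e k) y = e k v" if "k \<in> F" for k
    proof -
      have "vip V (e k) y = vip V y (e k)" by (rule vip_sym)
      also have "\<dots> = (\<Sum>l\<in>F. e l v * vip V (e l) (e k))" unfolding y_def by (rule vip_sum)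
      also have "\<dots> = (\<Sum>l\<in>F. if l = k then e l v else 0)"
        using orth that by (auto intro!: sum.cong)
      also have "\<dots> = e k v" using F(2) that by simp
      finally show ?thesis .
    qed
    have h3: "vip V y y = S"
    proof -
      have "vip V y y = (\<Sum>l\<in>F. e l v * vip V (e l) y)" unfolding y_def by (rule vip_sum)
      also have "\<dots> = (\<Sum>l\<in>F. (e l v)^2)" using h2 by (auto intro!: sum.cong simp: power2_eq_square)
      finally show ?thesis unfolding S_def .
    qed
    have h0: "vip V d d = 1"
    proof -
      have "vip V d d = (\<Sum>w\<in>V. if w = v then 1 else 0)"
        unfolding vip_def d_def by (auto intro!: sum.cong)
      then show ?thesis using fin v by simp
    qed
    have "0 \<le> vip V (\<lambda>u. d u + (-1) * y u) (\<lambda>u. d u + (-1) * y u)" by (rule vip_nonneg)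
    also have "\<dots> = vip V d d - 2 * vip V d y + vip V y y"
      unfolding vip_lin1 vip_lin2 using vip_sym[of V d y] by simp
    finally show ?thesis using h0 h1 h3 unfolding S_def by simp
  qed
  have "real (card F) = (\<Sum>l\<in>F. vip V (e l) (e l))" using e by simp
  also have "\<dots> = (\<Sum>l\<in>F. \<Sum>v\<in>V. (e l v)^2)"
    unfolding vip_def by (simp add: power2_eq_square)
  also have "\<dots> = (\<Sum>v\<in>V. \<Sum>l\<in>F. (e l v)^2)" by (rule sum.swap)
  also have "\<dots> \<le> (\<Sum>v\<in>V. 1)" by (rule sum_mono) (rule bessel)
  also have "\<dots> = real (card V)" by simp
  finally show False using F(3) by simp
qed

lemma spread_ge:
  assumes fin: "finite V" and ne: "V \<noteq> {}" and sym: "\<forall>u\<in>V. \<forall>w\<in>V. M u w = M w u"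
    and x: "vip V x x > 0" and y: "vip V y y > 0"
  shows "Max {l. is_eigenvalue V M l} - Min {l. is_eigenvalue V M l}
      \<ge> vbl V M x x / vip V x x - vbl V M y y / vip V y y"
proof -
  obtain l1 where l1: "is_eigenvalue V M l1" "\<forall>x. vbl V M x x \<le> l1 * vip V x x"
    using eig_max[OF fin ne sym] by blast
  obtain l2 where l2: "is_eigenvalue V M l2" "\<forall>x. l2 * vip V x x \<le> vbl V M x x"
    using eig_min[OF fin ne sym] by blast
  have finS: "finite {l. is_eigenvalue V M l}" by (rule eig_finite[OF fin sym])
  have "l1 \<le> Max {l. is_eigenvalue V M l}" using finS l1(1) by (auto intro: Max_ge)
  moreover have "Min {l. is_eigenvalue V M l} \<le> l2" using finS l2(1) by (auto intro: Min_le)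
  moreover have "vbl V M x x / vip V x x \<le> l1" using l1(2) x by (simp add: divide_le_eq)
  moreover have "l2 \<le> vbl V M y y / vip V y y" using l2(2) y by (simp add: le_divide_eq)
  ultimately show ?thesis by linarith
qed



lemma sum_split: "finite V \<Longrightarrow> C \<subseteq> V \<Longrightarrow> sum f V = sum f C + sum f (V - C)"
  by (simp add: sum.subset_diff[of C V f] add.commute)

definition blk :: "('a\<Rightarrow>'a\<Rightarrow>real) \<Rightarrow> 'a set \<Rightarrow> 'a set \<Rightarrow> real" where
  "blk M A B = (\<Sum>u\<in>A. \<Sum>w\<in>B. M u w)"

lemma blk_split: assumes "finite V" "C \<subseteq> V"
  shows "blk M V V = blk M C C + blk M C (V - C) + blk M (V - C) C + blk M (V - C) (V - C)"
proof -
  have "blk M V V = (\<Sum>u\<in>V. (\<Sum>w\<in>C. M u w) + (\<Sum>w\<in>V - C. M u w))"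
    unfolding blk_def by (rule sum.cong[OF refl], rule sum_split[OF assms])
  also have "\<dots> = (\<Sum>u\<in>C. (\<Sum>w\<in>C. M u w) + (\<Sum>w\<in>V - C. M u w)) + (\<Sum>u\<in>V-C. (\<Sum>w\<in>C. M u w) + (\<Sum>w\<in>V - C. M u w))"
    by (rule sum_split[OF assms])
  finally show ?thesis unfolding blk_def by (simp add: sum.distrib)
qed

lemma vbl_two: assumes fin: "finite V" and CV: "C \<subseteq> V"
  shows "vbl V M (\<lambda>u. if u \<in> C then a else b) (\<lambda>u. if u \<in> C then a else b)
    = a^2 * blk M C C + a * b * (blk M C (V - C) + blk M (V - C) C) + b^2 * blk M (V - C) (V - C)"
proof -
  let ?x = "\<lambda>u. if u \<in> C then a else b"
  have inner: "(\<Sum>w\<in>V. M u w * ?x w) = a * (\<Sum>w\<in>C. M u w) + b * (\<Sum>w\<in>V-C. M u w)" for u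
  proof -
    have "(\<Sum>w\<in>V. M u w * ?x w) = (\<Sum>w\<in>C. M u w * ?x w) + (\<Sum>w\<in>V-C. M u w * ?x w)"
      by (rule sum_split[OF fin CV])
    also have "(\<Sum>w\<in>C. M u w * ?x w) = a * (\<Sum>w\<in>C. M u w)"
      by (simp add: sum_distrib_left mult.commute)
    also have "(\<Sum>w\<in>V-C. M u w * ?x w) = b * (\<Sum>w\<in>V-C. M u w)"
      by (simp add: sum_distrib_left mult.commute)
    finally show ?thesis .
  qed
  have "vbl V M ?x ?x = (\<Sum>u\<in>V. ?x u * (a * (\<Sum>w\<in>C. M u w) + b * (\<Sum>w\<in>V-C. M u w)))"
    unfolding vbl_def inner ..
  also have "\<dots> = (\<Sum>u\<in>C. ?x u * (a * (\<Sum>w\<in>C. M u w) + b * (\<Sum>w\<in>V-C. M u w)))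
      + (\<Sum>u\<in>V-C. ?x u * (a * (\<Sum>w\<in>C. M u w) + b * (\<Sum>w\<in>V-C. M u w)))"
    by (rule sum_split[OF fin CV])
  also have "(\<Sum>u\<in>C. ?x u * (a * (\<Sum>w\<in>C. M u w) + b * (\<Sum>w\<in>V-C. M u w)))
      = a^2 * blk M C C + a * b * blk M C (V - C)"
    unfolding blk_def by (simp add: sum.distrib sum_distrib_left algebra_simps power2_eq_square)
  also have "(\<Sum>u\<in>V-C. ?x u * (a * (\<Sum>w\<in>C. M u w) + b * (\<Sum>w\<in>V-C. M u w)))
      = a * b * blk M (V - C) C + b^2 * blk M (V - C) (V - C)"
    unfolding blk_def by (simp add: sum.distrib sum_distrib_left algebra_simps power2_eq_square)
  finally show ?thesis by (simp add: algebra_simps)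
qed

lemma vip_two: assumes fin: "finite V" and CV: "C \<subseteq> V"
  shows "vip V (\<lambda>u. if u \<in> C then a else b) (\<lambda>u. if u \<in> C then a else b)
    = a^2 * real (card C) + b^2 * real (card (V - C))"
proof -
  let ?x = "\<lambda>u. if u \<in> C then a else b"
  have "vip V ?x ?x = (\<Sum>u\<in>C. ?x u * ?x u) + (\<Sum>u\<in>V-C. ?x u * ?x u)"
    unfolding vip_def by (rule sum_split[OF fin CV])
  then show ?thesis by (simp add: power2_eq_square)
qed

lemma two_by_two: fixes p q r :: real
  shows "\<exists>a1 b1. a1^2 + b1^2 = 1 \<and> (a1^2 - b1^2) * (p - r) + 4 * a1 * b1 * q = sqrt ((p - r)^2 + 4 * q^2)"
proof (cases "(p - r)^2 + 4 * q^2 = 0")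
  case True
  then have "(p - r)^2 = 0" "q^2 = 0" by (smt (verit) zero_le_power2)+
  then have "p - r = 0" "q = 0" by simp_all
  then show ?thesis using True by (intro exI[of _ 1] exI[of _ 0]) simp
next
  case False
  define D where "D = sqrt ((p - r)^2 + 4 * q^2)"
  have "(p - r)^2 + 4 * q^2 \<ge> 0" by (simp add: add_nonneg_nonneg)
  then have "(p - r)^2 + 4 * q^2 > 0" using False by linarith
  then have Dpos: "D > 0" unfolding D_def by simp
  have D2: "D^2 = (p - r)^2 + 4 * q^2" unfolding D_def by (simp add: add_nonneg_nonneg)
  define c where "c = (p - r) / D"
  define s where "s = 2 * q / D"
  have cs: "c^2 + s^2 = 1"
  proof -
    have "c^2 + s^2 = ((p - r)^2 + 4*q^2) / D^2" unfolding c_def s_def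
      by (simp add: power_divide power_mult_distrib add_divide_distrib)
    then show ?thesis using D2 Dpos False by simp
  qed
  then have c1: "c^2 \<le> 1" by (smt (verit) zero_le_power2)
  then have "\<bar>c\<bar> \<le> 1" using abs_square_le_1[of c] by linarith
  then have cb: "-1 \<le> c" "c \<le> 1" by auto
  define sg where "sg = (if s \<ge> 0 then 1 else -1::real)"
  define a1 where "a1 = sqrt ((1 + c) / 2)"
  define b1 where "b1 = sg * sqrt ((1 - c) / 2)"
  have a12: "a1^2 = (1 + c) / 2" unfolding a1_def using cb by simp
  have b12: "b1^2 = (1 - c) / 2" unfolding b1_def sg_def using cb by (simp add: power_mult_distrib)
  have "a1 * b1 = sg * (sqrt ((1 + c) / 2) * sqrt ((1 - c) / 2))" unfolding a1_def b1_def by simp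
  also have "\<dots> = sg * sqrt ((1 + c) / 2 * ((1 - c) / 2))" by (simp only: real_sqrt_mult)
  also have "(1 + c) / 2 * ((1 - c) / 2) = (s / 2)^2" using cs by (simp add: power_divide algebra_simps power2_eq_square)
  also have "sg * sqrt ((s / 2)^2) = s / 2" unfolding sg_def by auto
  finally have ab0: "a1 * b1 = s / 2" .
  then have ab: "2 * a1 * b1 = s" by simp
  have "(a1^2 - b1^2) * (p - r) + 4 * a1 * b1 * q = c * (p - r) + s * (2 * q)"
  proof -
    have e1: "a1^2 - b1^2 = c" using a12 b12 by (simp add: field_simps)
    have "4 * a1 * b1 * q = 4 * (a1 * b1) * q" by (simp add: mult.assoc)
    also have "\<dots> = s * (2 * q)" using ab0 by simp
    finally show ?thesis using e1 by simp
  qed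
  also have "\<dots> = D^2 / D" unfolding c_def s_def D2 using Dpos by (simp add: field_simps power2_eq_square)
  also have "\<dots> = D" using Dpos by (simp add: power2_eq_square)
  finally have fin: "(a1^2 - b1^2) * (p - r) + 4 * a1 * b1 * q = sqrt ((p - r)^2 + 4 * q^2)"
    unfolding D_def .
  moreover have "a1^2 + b1^2 = 1" using a12 b12 by simp
  ultimately show ?thesis by blast
qed



lemma poly_identity: fixes n w m s W :: real
  assumes "n = w + m"
  shows "(m * (s + w * (w - 1)) - w * (4 * W - 3 * s + w * (w - 1)))^2 + 4 * w * m * (s - w * (w - 1))^2
    = (n * w * (1 - w) + 4 * w * (s - W) - n * s)^2 - 4 * (4 * W * w * (w - 1) + 4 * s * (W - s)) * (n - w) * w"
  unfolding assms by algebra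

lemma trans_sum: assumes "u \<in> V" "finite V"
  shows "transmission V E u = (\<Sum>w\<in>V. real (gdist E u w))"
  unfolding transmission_def using assms by (simp add: sum_diff1 gdist_refl)

lemma graph_sym: "simple_graph V E \<Longrightarrow> \<forall>u v. E u v \<longrightarrow> E v u"
  unfolding simple_graph_def by blast

lemma Q_sym: assumes "simple_graph V E"
  shows "\<forall>u\<in>V. \<forall>w\<in>V. dsl_matrix V E u w = dsl_matrix V E w u"
  unfolding dsl_matrix_def using gdist_sym[OF graph_sym[OF assms]] by auto

lemma clique_main:
  assumes sg: "simple_graph V E" and cl: "is_clique V E C" and c2: "card C \<ge> 2" and cV: "card C < card V"
  shows "dsl_spread V E \<ge> (let n = real (card V); \<omega> = real (card C); W = wiener V E;
      s = (\<Sum>v\<in>C. transmission V E v);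
      a = n * \<omega> * (1 - \<omega>) + 4 * \<omega> * (s - W) - n * s;
      b = 4 * W * \<omega> * (\<omega> - 1) + 4 * s * (W - s)
    in sqrt (a\<^sup>2 - 4 * b * (n - \<omega>) * \<omega>) / ((n - \<omega>) * \<omega>))"
proof -
  have fin: "finite V" using sg unfolding simple_graph_def by blast
  have CV: "C \<subseteq> V" using cl unfolding is_clique_def by blast
  have finC: "finite C" using fin CV finite_subset by blast
  define Q where "Q = dsl_matrix V E"
  define d where "d = (\<lambda>u w. real (gdist E u w))"
  define X where "X = V - C"
  define n where "n = real (card V)"
  define w where "w = real (card C)"
  define m where "m = real (card X)"
  define W where "W = wiener V E"
  define s where "s = (\<Sum>v\<in>C. transmission V E v)"
  define D where "D = transmission V E"
  have Qsym: "\<forall>u\<in>V. \<forall>v\<in>V. Q u v = Q v u" unfolding Q_def by (rule Q_sym[OF sg])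
  have nwm: "n = w + m" unfolding n_def w_def m_def X_def using card_Diff_subset[OF finC CV] CV fin
    by (simp add: card_mono of_nat_diff)
  have wpos: "w > 0" unfolding w_def using c2 by simp
  have mpos: "m > 0" unfolding m_def X_def using cV card_Diff_subset[OF finC CV] by simp
  have Dsum: "D u = (\<Sum>v\<in>V. d u v)" if "u \<in> V" for u
    unfolding D_def d_def using trans_sum[OF that fin] .
  have dC: "d u v = (if u = v then 0 else 1)" if "u \<in> C" "v \<in> C" for u v
  proof (cases "u = v")
    case True then show ?thesis unfolding d_def by (simp add: gdist_refl)
  next
    case False
    then have "E u v" using cl that unfolding is_clique_def by blast
    then show ?thesis using False unfolding d_def by (simp add: gdist_adj)
  qed
  have rowC: "(\<Sum>v\<in>C. d u v) = w - 1" if u: "u \<in> C" for u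
  proof -
    have "(\<Sum>v\<in>C. d u v) = (\<Sum>v\<in>C. if u = v then 0 else 1)" using dC u by (auto intro!: sum.cong)
    also have "\<dots> = (\<Sum>v\<in>C. 1 - (if u = v then 1 else 0))" by (auto intro!: sum.cong)
    also have "\<dots> = w - 1" unfolding w_def using finC u by (simp add: sum_subtractf)
    finally show ?thesis .
  qed
  have TCC: "blk Q C C = s + w * (w - 1)"
  proof -
    have "blk Q C C = (\<Sum>u\<in>C. D u + (w - 1))" unfolding blk_def
    proof (rule sum.cong[OF refl])
      fix u assume u: "u \<in> C"
      have "(\<Sum>v\<in>C. Q u v) = (\<Sum>v\<in>C. (if u = v then D u else 0) + d u v)"
        unfolding Q_def dsl_matrix_def D_def d_def by simp
      also have "\<dots> = D u + (w - 1)" using u finC rowC[OF u] by (simp add: sum.distrib)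
      finally show "(\<Sum>v\<in>C. Q u v) = D u + (w - 1)" .
    qed
    also have "\<dots> = s + w * (w - 1)" unfolding s_def D_def w_def by (simp add: sum.distrib)
    finally show ?thesis .
  qed
  have TCX: "blk Q C X = s - w * (w - 1)"
  proof -
    have "blk Q C X = (\<Sum>u\<in>C. D u - (w - 1))" unfolding blk_def
    proof (rule sum.cong[OF refl])
      fix u assume u: "u \<in> C"
      have "(\<Sum>v\<in>X. Q u v) = (\<Sum>v\<in>X. d u v)"
        unfolding Q_def dsl_matrix_def d_def X_def using u by (auto intro!: sum.cong)
      also have "\<dots> = D u - (w - 1)"
        using Dsum[of u] u CV sum_split[OF fin CV, of "d u"] rowC[OF u] unfolding X_def by auto
      finally show "(\<Sum>v\<in>X. Q u v) = D u - (w - 1)" .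
    qed
    also have "\<dots> = s - w * (w - 1)" unfolding s_def D_def w_def by (simp add: sum_subtractf)
    finally show ?thesis .
  qed
  have TXC: "blk Q X C = blk Q C X"
  proof -
    have "blk Q X C = (\<Sum>v\<in>C. \<Sum>u\<in>X. Q u v)" unfolding blk_def by (rule sum.swap)
    also have "\<dots> = blk Q C X" unfolding blk_def X_def using Qsym CV by (auto intro!: sum.cong)
    finally show ?thesis .
  qed
  have TVV: "blk Q V V = 4 * W"
  proof -
    have "blk Q V V = (\<Sum>u\<in>V. 2 * (\<Sum>v\<in>V. d u v))" unfolding blk_def
    proof (rule sum.cong[OF refl])
      fix u assume u: "u \<in> V"
      have "(\<Sum>v\<in>V. Q u v) = (\<Sum>v\<in>V. (if u = v then D u else 0) + d u v)"
        unfolding Q_def dsl_matrix_def D_def d_def by simp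
      also have "\<dots> = D u + (\<Sum>v\<in>V. d u v)" using u fin by (simp add: sum.distrib)
      finally show "(\<Sum>v\<in>V. Q u v) = 2 * (\<Sum>v\<in>V. d u v)" using Dsum[OF u] by simp
    qed
    also have "\<dots> = 2 * (\<Sum>u\<in>V. \<Sum>v\<in>V. d u v)" by (rule sum_distrib_left[symmetric])
    also have "\<dots> = 4 * W" unfolding W_def wiener_def d_def by simp
    finally show ?thesis .
  qed
  define P where "P = blk Q C C"
  define H where "H = blk Q C X"
  define R where "R = blk Q X X"
  have PHR: "P = s + w * (w - 1)" "H = s - w * (w - 1)" "R = 4 * W - 3 * s + w * (w - 1)"
    using TCC TCX TXC TVV blk_split[OF fin CV, of Q] unfolding P_def H_def R_def X_def by auto
  define p where "p = P / w"
  define r where "r = R / m"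
  define q where "q = H / sqrt (w * m)"
  obtain a1 b1 where ab: "a1^2 + b1^2 = 1" "(a1^2 - b1^2) * (p - r) + 4 * a1 * b1 * q = sqrt ((p - r)^2 + 4 * q^2)"
    using two_by_two by blast
  define x where "x = (\<lambda>u. if u \<in> C then a1 / sqrt w else b1 / sqrt m)"
  define y where "y = (\<lambda>u. if u \<in> C then - b1 / sqrt w else a1 / sqrt m)"
  have sw: "sqrt w * sqrt w = w" "sqrt m * sqrt m = m" using wpos mpos by simp_all
  have swm: "1 / sqrt w * (1 / sqrt m) = 1 / sqrt (w * m)" by (simp add: real_sqrt_mult)
  have vx: "vip V x x = 1" unfolding x_def vip_two[OF fin CV]
    using ab(1) wpos mpos unfolding w_def[symmetric] m_def X_def[symmetric]
    by (simp add: power_divide)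
  have vy: "vip V y y = 1" unfolding y_def vip_two[OF fin CV]
    using ab(1) wpos mpos unfolding w_def[symmetric] m_def X_def[symmetric]
    by (simp add: power_divide)
  have bx: "vbl V Q x x = a1^2 * p + 2 * a1 * b1 * q + b1^2 * r"
  proof -
    have "vbl V Q x x = (a1 / sqrt w)^2 * P + (a1 / sqrt w) * (b1 / sqrt m) * (H + H) + (b1 / sqrt m)^2 * R"
      unfolding x_def vbl_two[OF fin CV] P_def H_def R_def X_def TXC[unfolded X_def] ..
    also have "(a1 / sqrt w) * (b1 / sqrt m) = a1 * b1 * (1 / sqrt (w * m))"
      using swm by (simp add: field_simps)
    finally show ?thesis unfolding p_def q_def r_def using wpos mpos
      by (simp add: power_divide algebra_simps)
  qed
  have byy: "vbl V Q y y = b1^2 * p - 2 * a1 * b1 * q + a1^2 * r"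
  proof -
    have "vbl V Q y y = (- b1 / sqrt w)^2 * P + (- b1 / sqrt w) * (a1 / sqrt m) * (H + H) + (a1 / sqrt m)^2 * R"
      unfolding y_def vbl_two[OF fin CV] P_def H_def R_def X_def TXC[unfolded X_def] ..
    also have "(- b1 / sqrt w) * (a1 / sqrt m) = - (a1 * b1 * (1 / sqrt (w * m)))"
      using swm by (simp add: field_simps)
    finally show ?thesis unfolding p_def q_def r_def using wpos mpos
      by (simp add: power_divide algebra_simps)
  qed
  have Vne: "V \<noteq> {}" using cV by auto
  have sp: "dsl_spread V E \<ge> vbl V Q x x / vip V x x - vbl V Q y y / vip V y y"
    unfolding dsl_spread_def Q_def using spread_ge[OF fin Vne Q_sym[OF sg], of x y] vx vy by simp
  have "vbl V Q x x / vip V x x - vbl V Q y y / vip V y y = sqrt ((p - r)^2 + 4 * q^2)"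
    using ab(2) unfolding vx vy bx byy by (simp add: algebra_simps)
  define Z where "Z = (m * P - w * R)^2 + 4 * w * m * H^2"
  have "(p - r)^2 + 4 * q^2 = Z / (w * m)^2"
  proof -
    have q2: "q^2 = H^2 / (w * m)" unfolding q_def using wpos mpos by (simp add: power_divide)
    show ?thesis unfolding q2 p_def r_def Z_def using wpos mpos
      by (simp add: field_simps power2_eq_square)
  qed
  then have "sqrt ((p - r)^2 + 4 * q^2) = sqrt Z / (w * m)"
    using wpos mpos by (simp add: real_sqrt_divide)
  also have "Z = (n * w * (1 - w) + 4 * w * (s - W) - n * s)^2 - 4 * (4 * W * w * (w - 1) + 4 * s * (W - s)) * (n - w) * w"
    unfolding Z_def PHR by (rule poly_identity[OF nwm])
  finally have main: "dsl_spread V E \<ge> sqrt ((n * w * (1 - w) + 4 * w * (s - W) - n * s)^2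
      - 4 * (4 * W * w * (w - 1) + 4 * s * (W - s)) * (n - w) * w) / ((n - w) * w)"
    using sp \<open>vbl V Q x x / vip V x x - vbl V Q y y / vip V y y = sqrt ((p - r)^2 + 4 * q^2)\<close> nwm
    by (simp add: mult.commute)
  then show ?thesis unfolding Let_def n_def w_def W_def s_def .
qed



lemma complete_spread:
  assumes sg: "simple_graph V E" and comp: "\<forall>u\<in>V. \<forall>v\<in>V. u \<noteq> v \<longrightarrow> E u v" and n2: "card V \<ge> 2"
  shows "dsl_spread V E = real (card V)"
proof -
  have fin: "finite V" using sg unfolding simple_graph_def by blast
  define n where "n = real (card V)"
  have dd: "real (gdist E u v) = (if u = v then 0 else 1)" if "u \<in> V" "v \<in> V" for u v
    using comp that by (auto simp: gdist_refl gdist_adj)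
  have DD: "transmission V E u = n - 1" if u: "u \<in> V" for u
  proof -
    have "transmission V E u = (\<Sum>v\<in>V. if u = v then 0 else 1)"
      unfolding trans_sum[OF u fin] using dd u by (auto intro!: sum.cong)
    also have "\<dots> = (\<Sum>v\<in>V. 1 - (if u = v then 1 else 0))" by (auto intro!: sum.cong)
    also have "\<dots> = n - 1" unfolding n_def using fin u by (simp add: sum_subtractf)
    finally show ?thesis .
  qed
  have row: "(\<Sum>v\<in>V. dsl_matrix V E u v * x v) = (n - 2) * x u + (\<Sum>v\<in>V. x v)" if u: "u \<in> V" for u x
  proof -
    have "(\<Sum>v\<in>V. dsl_matrix V E u v * x v) = (\<Sum>v\<in>V. x v + (if u = v then (n - 2) * x v else 0))"
      unfolding dsl_matrix_def using dd u DD[OF u] by (auto intro!: sum.cong simp: algebra_simps)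
    also have "\<dots> = (\<Sum>v\<in>V. x v) + (n - 2) * x u" using fin u by (simp add: sum.distrib)
    finally show ?thesis by simp
  qed
  have S: "{l. is_eigenvalue V (dsl_matrix V E) l} = {2 * n - 2, n - 2}"
  proof (intro equalityI subsetI)
    fix l assume "l \<in> {l. is_eigenvalue V (dsl_matrix V E) l}"
    then obtain x where x: "\<exists>v\<in>V. x v \<noteq> 0" "\<forall>u\<in>V. (\<Sum>w\<in>V. dsl_matrix V E u w * x w) = l * x u"
      unfolding is_eigenvalue_def by blast
    have eq: "(l - (n - 2)) * x u = (\<Sum>v\<in>V. x v)" if "u \<in> V" for u
      using x(2) row[OF that, of x] that by (simp add: algebra_simps)
    show "l \<in> {2 * n - 2, n - 2}"
    proof (cases "(\<Sum>v\<in>V. x v) = 0")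
      case True
      obtain v where "v \<in> V" "x v \<noteq> 0" using x(1) by blast
      then have "l - (n - 2) = 0" using eq[of v] True by simp
      then show ?thesis by simp
    next
      case False
      have "(\<Sum>u\<in>V. (l - (n - 2)) * x u) = (\<Sum>u\<in>V. (\<Sum>v\<in>V. x v))" using eq by (auto intro!: sum.cong)
      then have "(l - (n - 2)) * (\<Sum>u\<in>V. x u) = n * (\<Sum>v\<in>V. x v)"
        unfolding n_def by (simp add: sum_distrib_left)
      then have "l - (n - 2) = n" using False by simp
      then show ?thesis by simp
    qed
  next
    fix l assume "l \<in> {2 * n - 2, n - 2}"
    then consider "l = 2 * n - 2" | "l = n - 2" by blast
    then show "l \<in> {l. is_eigenvalue V (dsl_matrix V E) l}"
    proof cases
      case 1
      have "V \<noteq> {}" using n2 by auto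
      then obtain v where "v \<in> V" by blast
      moreover have "\<forall>u\<in>V. (\<Sum>w\<in>V. dsl_matrix V E u w * 1) = l * 1"
        using row[of _ "\<lambda>_. 1"] 1 unfolding n_def by simp
      ultimately show ?thesis unfolding is_eigenvalue_def by (intro CollectI exI[of _ "\<lambda>_. 1"]) auto
    next
      case 2
      have "\<not> card V \<le> Suc 0" using n2 by simp
      then have "\<not> (\<forall>a1\<in>V. \<forall>a2\<in>V. a1 = a2)" using card_le_Suc0_iff_eq[OF fin] by simp
      then obtain a b where ab: "a \<in> V" "b \<in> V" "a \<noteq> b" by blast
      define x where "x = (\<lambda>v. (if v = a then 1 else 0) - (if v = b then 1 else (0::real)))"
      have sx: "(\<Sum>v\<in>V. x v) = 0" unfolding x_def using ab fin by (simp add: sum_subtractf)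
      have "\<forall>u\<in>V. (\<Sum>w\<in>V. dsl_matrix V E u w * x w) = l * x u"
        using row[of _ x] sx 2 by simp
      moreover have "x a \<noteq> 0" unfolding x_def using ab by simp
      ultimately show ?thesis unfolding is_eigenvalue_def using ab by blast
    qed
  qed
  have "n \<ge> 2" unfolding n_def using n2 by simp
  then show ?thesis unfolding dsl_spread_def S n_def[symmetric] by (simp add: max_def min_def)
qed

lemma clique_facts:
  assumes sg: "simple_graph V E"
  shows "\<exists>C. is_clique V E C \<and> card C = clique_number V E"
    and "\<And>C. is_clique V E C \<Longrightarrow> card C \<le> card V"
proof -
  have fin: "finite V" using sg unfolding simple_graph_def by blast
  show cle: "\<And>C. is_clique V E C \<Longrightarrow> card C \<le> card V"
    using fin card_mono unfolding is_clique_def by blast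
  have "{card C | C. is_clique V E C} \<subseteq> {0..card V}" using cle by auto
  then have "finite {card C | C. is_clique V E C}" using finite_subset by blast
  moreover have "is_clique V E {}" unfolding is_clique_def by simp
  then have "{card C | C. is_clique V E C} \<noteq> {}" by blast
  ultimately have "clique_number V E \<in> {card C | C. is_clique V E C}"
    unfolding clique_number_def by (rule Max_in)
  then show "\<exists>C. is_clique V E C \<and> card C = clique_number V E" by auto
qed

theorem theorem4p6:
  fixes V :: "'a set" and E :: "'a \<Rightarrow> 'a \<Rightarrow> bool"
  assumes "simple_graph V E" and "connected_graph V E"
    and "clique_number V E \<ge> 2"
  shows "(clique_number V E = card V \<longrightarrow> dsl_spread V E = real (card V))
    \<and> (clique_number V E \<le> card V - 1 \<longrightarrow>
        (let n = real (card V); \<omega> = real (clique_number V E); W = wiener V E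
         in dsl_spread V E \<ge>
              Max ((\<lambda>C. let s = (\<Sum>v\<in>C. transmission V E v);
                            a = n * \<omega> * (1 - \<omega>) + 4 * \<omega> * (s - W) - n * s;
                            b = 4 * W * \<omega> * (\<omega> - 1) + 4 * s * (W - s)
                        in sqrt (a\<^sup>2 - 4 * b * (n - \<omega>) * \<omega>) / ((n - \<omega>) * \<omega>))
                   ` {C. is_clique V E C \<and> card C = clique_number V E})))"
proof (intro conjI impI)
  have sg: "simple_graph V E" by fact
  have fin: "finite V" using sg unfolding simple_graph_def by blast
  obtain C0 where C0: "is_clique V E C0" "card C0 = clique_number V E" using clique_facts(1)[OF sg] by blast
  {
    assume h: "clique_number V E = card V"
    have "C0 \<subseteq> V" using C0(1) unfolding is_clique_def by blast
    then have "C0 = V" by (rule card_subset_eq[OF fin]) (simp add: C0(2) h)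
    then have "\<forall>u\<in>V. \<forall>v\<in>V. u \<noteq> v \<longrightarrow> E u v" using C0(1) unfolding is_clique_def by blast
    then show "dsl_spread V E = real (card V)"
      using complete_spread[OF sg] h assms(3) by simp
  }
  {
    assume h: "clique_number V E \<le> card V - 1"
    have lt: "clique_number V E < card V" using h assms(3) by linarith
    let ?S = "{C. is_clique V E C \<and> card C = clique_number V E}"
    have finS: "finite ?S"
    proof (rule finite_subset[of _ "Pow V"])
      show "?S \<subseteq> Pow V" unfolding is_clique_def by blast
    qed (use fin in simp)
    have neS: "?S \<noteq> {}" using C0 by blast
    show "let n = real (card V); \<omega> = real (clique_number V E); W = wiener V E
         in dsl_spread V E \<ge>
              Max ((\<lambda>C. let s = (\<Sum>v\<in>C. transmission V E v);
                            a = n * \<omega> * (1 - \<omega>) + 4 * \<omega> * (s - W) - n * s;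
                            b = 4 * W * \<omega> * (\<omega> - 1) + 4 * s * (W - s)
                        in sqrt (a\<^sup>2 - 4 * b * (n - \<omega>) * \<omega>) / ((n - \<omega>) * \<omega>)) ` ?S)"
      unfolding Let_def
      apply (rule Max.boundedI)
        apply (rule finite_imageI[OF finS])
      using neS apply blast
      apply (erule imageE)
      subgoal premises prems for a C
      proof -
        have C: "is_clique V E C" "card C = clique_number V E" using prems by auto
        have c2: "card C \<ge> 2" "card C < card V" using C(2) assms(3) lt by auto
        show ?thesis unfolding prems(1) using clique_main[OF sg C(1) c2, unfolded Let_def C(2)] .
      qed
      done
  }
qed

end
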